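(* Let $m$ be a nonnegative integer and suppose there is a resolvable $(56m+8,8,1)$-BIBD. Let $0\le t\le 8m$ and suppose there exists a nested $(3t+1,4,1)$-BIBD. Then there exists a nested $(v,4,1)$-BIBD for $v=168m+3t+25$.
   Context: A $(v,k,\lambda)$-BIBD is a set $X$ of $v$ points with a multiset $\mathcal{A}$ of $k$-subsets such that every pair of distinct points lies in exactly $\lambda$ blocks (partial: at most $\lambda$). It is resolvable if its blocks can be partitioned into parallel classes, each of which partitions $X$. A $(v,4,1)$-BIBD is nested if there is a map $\phi:\mathcal{A}\to X$ such that $\{A\cup\{\phi(A)\}:A\in\mathcal{A}\}$ is the block multiset of a partial $(v,5,2)$-BIBD on $X$ (in particular $\phi(A)\notin A$). *)

theory Defs
  imports Main "HOL-Library.Multiset"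
begin

definition blocks_ok :: "'a set \<Rightarrow> nat \<Rightarrow> 'a set multiset \<Rightarrow> bool" where
  "blocks_ok X k B \<longleftrightarrow> (\<forall>A\<in>#B. A \<subseteq> X \<and> card A = k)"

definition pair_count :: "'a set multiset \<Rightarrow> 'a \<Rightarrow> 'a \<Rightarrow> nat" where
  "pair_count B x y = size (filter_mset (\<lambda>A. x \<in> A \<and> y \<in> A) B)"

definition is_bibd :: "'a set \<Rightarrow> nat \<Rightarrow> nat \<Rightarrow> nat \<Rightarrow> 'a set multiset \<Rightarrow> bool" where
  "is_bibd X v k l B \<longleftrightarrow> finite X \<and> card X = v \<and> blocks_ok X k B \<and>
     (\<forall>x\<in>X. \<forall>y\<in>X. x \<noteq> y \<longrightarrow> pair_count B x y = l)"

definition is_partial_bibd :: "'a set \<Rightarrow> nat \<Rightarrow> nat \<Rightarrow> nat \<Rightarrow> 'a set multiset \<Rightarrow> bool" where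
  "is_partial_bibd X v k l B \<longleftrightarrow> finite X \<and> card X = v \<and> blocks_ok X k B \<and>
     (\<forall>x\<in>X. \<forall>y\<in>X. x \<noteq> y \<longrightarrow> pair_count B x y \<le> l)"

definition parallel_class :: "'a set \<Rightarrow> 'a set multiset \<Rightarrow> bool" where
  "parallel_class X C \<longleftrightarrow> (\<forall>A\<in>#C. A \<subseteq> X) \<and>
     (\<forall>x\<in>X. size (filter_mset (\<lambda>A. x \<in> A) C) = 1)"

definition resolvable_bibd :: "'a set \<Rightarrow> nat \<Rightarrow> nat \<Rightarrow> nat \<Rightarrow> 'a set multiset \<Rightarrow> bool" where
  "resolvable_bibd X v k l B \<longleftrightarrow> is_bibd X v k l B \<and>
     (\<exists>P :: 'a set multiset multiset. sum_mset P = B \<and> (\<forall>C\<in>#P. parallel_class X C))"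

definition nested_bibd :: "'a set \<Rightarrow> nat \<Rightarrow> 'a set multiset \<Rightarrow> bool" where
  "nested_bibd X v B \<longleftrightarrow> is_bibd X v 4 1 B \<and>
     (\<exists>phi :: 'a set \<Rightarrow> 'a. (\<forall>A\<in>#B. phi A \<in> X) \<and>
        is_partial_bibd X v 5 2 (image_mset (\<lambda>A. insert (phi A) A) B))"

end

theory Submission
  imports Defs "HOL-Library.Countable" "HOL-Library.Code_Binary_Nat"
begin

definition bc :: "('a set \<times> 'a) multiset \<Rightarrow> 'a \<Rightarrow> 'a \<Rightarrow> nat" where
  "bc N x y = size (filter_mset (\<lambda>(A,p). x \<in> A \<and> y \<in> A) N)"
definition ac :: "('a set \<times> 'a) multiset \<Rightarrow> 'a \<Rightarrow> 'a \<Rightarrow> nat" where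
  "ac N x y = size (filter_mset (\<lambda>(A,p). x \<in> insert p A \<and> y \<in> insert p A) N)"
definition good :: "('a set \<times> 'a) multiset \<Rightarrow> bool" where
  "good N \<longleftrightarrow> (\<forall>x y. x \<noteq> y \<longrightarrow> ac N x y \<le> 2 * bc N x y)"
definition wfb :: "'a set \<Rightarrow> ('a set \<times> 'a) multiset \<Rightarrow> bool" where
  "wfb X N \<longleftrightarrow> (\<forall>(A,p)\<in>#N. A \<subseteq> X \<and> card A = 4 \<and> p \<in> X \<and> p \<notin> A)"

lemma bc_plus[simp]: "bc (M + N) x y = bc M x y + bc N x y" by (simp add: bc_def)
lemma ac_plus[simp]: "ac (M + N) x y = ac M x y + ac N x y" by (simp add: ac_def)
lemma bc_empty[simp]: "bc {#} x y = 0" by (simp add: bc_def)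
lemma ac_empty[simp]: "ac {#} x y = 0" by (simp add: ac_def)
lemma bc_sum_mset: "bc (sum_mset MM) x y = sum_mset (image_mset (\<lambda>N. bc N x y) MM)"
  by (induction MM) auto
lemma bc_sum_list: "bc (sum_list Ms) x y = sum_list (map (\<lambda>N. bc N x y) Ms)"
  by (induction Ms) auto
lemma bc_sym: "bc N x y = bc N y x"
  unfolding bc_def by (rule arg_cong[where f=size], rule filter_mset_cong) auto

lemma good_plus: "good M \<Longrightarrow> good N \<Longrightarrow> good (M + N)"
  unfolding good_def by (auto simp: add_mono)
lemma good_empty: "good {#}" by (simp add: good_def)
lemma good_sum_mset: "(\<And>N. N \<in># MM \<Longrightarrow> good N) \<Longrightarrow> good (sum_mset MM)"
  by (induction MM) (auto intro: good_plus good_empty)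
lemma good_sum_list: "(\<And>N. N \<in> set Ms \<Longrightarrow> good N) \<Longrightarrow> good (sum_list Ms)"
  by (induction Ms) (auto intro: good_plus good_empty)

lemma wfb_plus: "wfb X M \<Longrightarrow> wfb X N \<Longrightarrow> wfb X (M + N)"
  unfolding wfb_def by auto
lemma wfb_sum_mset: "(\<And>N. N \<in># MM \<Longrightarrow> wfb X N) \<Longrightarrow> wfb X (sum_mset MM)"
  unfolding wfb_def by fastforce
lemma wfb_sum_list: "(\<And>N. N \<in> set Ms \<Longrightarrow> wfb X N) \<Longrightarrow> wfb X (sum_list Ms)"
  using wfb_sum_mset[of "mset Ms" X] by (simp add: sum_mset_sum_list)
lemma wfb_mono: "wfb X N \<Longrightarrow> X \<subseteq> Y \<Longrightarrow> wfb Y N"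
  unfolding wfb_def by blast

lemma pc_fst: "pair_count (image_mset fst N) x y = bc N x y"
  unfolding pair_count_def bc_def filter_mset_image_mset
  by (simp add: case_prod_unfold)
lemma pc_aug: "pair_count (image_mset (\<lambda>(A,p). insert p A) N) x y = ac N x y"
  unfolding pair_count_def ac_def filter_mset_image_mset
  by (simp add: case_prod_unfold)

lemma nested_from_N:
  assumes fin: "finite X" and cX: "card X = v" and wf: "wfb X N"
    and b1: "\<And>x y. x \<in> X \<Longrightarrow> y \<in> X \<Longrightarrow> x \<noteq> y \<Longrightarrow> bc N x y = 1"
    and a2: "\<And>x y. x \<in> X \<Longrightarrow> y \<in> X \<Longrightarrow> x \<noteq> y \<Longrightarrow> ac N x y \<le> 2"
  shows "nested_bibd X v (image_mset fst N)"
proof -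
  have uniq: "p = q" if "(A,p) \<in># N" "(A,q) \<in># N" for A p q
  proof (rule ccontr)
    assume ne: "p \<noteq> q"
    have c4: "card A = 4" and AX: "A \<subseteq> X" using wf that(1) unfolding wfb_def by auto
    obtain x y where xy: "x \<in> A" "y \<in> A" "x \<noteq> y"
    proof -
      have "2 \<le> card A" using c4 by simp
      then obtain S where "S \<subseteq> A" "card S = 2" by (meson obtain_subset_with_card_n)
      then obtain x y where "S = {x,y}" "x \<noteq> y" by (meson card_2_iff)
      then show ?thesis using that \<open>S \<subseteq> A\<close> by auto
    qed
    have sub: "{#(A,p),(A,q)#} \<subseteq># filter_mset (\<lambda>(A,p). x \<in> A \<and> y \<in> A) N"
    proof -
      have "(A,p) \<in># filter_mset (\<lambda>(A,p). x \<in> A \<and> y \<in> A) N"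
           "(A,q) \<in># filter_mset (\<lambda>(A,p). x \<in> A \<and> y \<in> A) N" using that xy by auto
      then show ?thesis using ne
        by (simp add: insert_subset_eq_iff in_diff_count)
    qed
    have "2 \<le> bc N x y" unfolding bc_def using size_mset_mono[OF sub] by simp
    with b1[of x y] xy AX show False by auto
  qed
  define phi where "phi A = (SOME p. (A,p) \<in># N)" for A
  have phiN: "phi A = p" if "(A,p) \<in># N" for A p
  proof -
    have "(A, phi A) \<in># N" unfolding phi_def using someI[of "\<lambda>p. (A,p) \<in># N" p] that by blast
    with uniq that show ?thesis by blast
  qed
  have img: "image_mset (\<lambda>A. insert (phi A) A) (image_mset fst N) = image_mset (\<lambda>(A,p). insert p A) N"
    by (simp add: multiset.map_comp o_def, rule image_mset_cong) (auto simp: phiN)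
  have aug5: "A \<subseteq> X \<and> card A = 5" if "A \<in># image_mset (\<lambda>(A, p). insert p A) N" for A
  proof -
    from that obtain B p where Bp: "(B,p) \<in># N" "A = insert p B" by auto
    with wf have "B \<subseteq> X" "card B = 4" "p \<in> X" "p \<notin> B" unfolding wfb_def by auto
    then show ?thesis using Bp by (auto simp: card_insert_if card_ge_0_finite)
  qed
  have "is_bibd X v 4 1 (image_mset fst N)"
    unfolding is_bibd_def blocks_ok_def
  proof (intro conjI ballI impI)
    show "finite X" "card X = v" by fact+
    show "A \<subseteq> X" "card A = 4" if "A \<in># image_mset fst N" for A
      using that wf unfolding wfb_def by fastforce+
    show "pair_count (image_mset fst N) x y = 1" if "x \<in> X" "y \<in> X" "x \<noteq> y" for x y
      using b1[OF that] pc_fst[of N x y] by simp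
  qed
  moreover have "\<forall>A\<in>#image_mset fst N. phi A \<in> X"
    using wf phiN unfolding wfb_def by fastforce
  moreover have "is_partial_bibd X v 5 2 (image_mset (\<lambda>A. insert (phi A) A) (image_mset fst N))"
    unfolding img is_partial_bibd_def blocks_ok_def
  proof (intro conjI ballI impI)
    show "finite X" "card X = v" by fact+
    show "A \<subseteq> X" "card A = 5" if "A \<in># image_mset (\<lambda>(A, p). insert p A) N" for A
      using aug5[OF that] by blast+
    show "pair_count (image_mset (\<lambda>(A, p). insert p A) N) x y \<le> 2" if "x \<in> X" "y \<in> X" "x \<noteq> y" for x y
      using a2[OF that] pc_aug[of N x y] by simp
  qed
  ultimately show ?thesis unfolding nested_bibd_def by blast
qed

definition T :: "('a \<Rightarrow> 'b) \<Rightarrow> ('a set \<times> 'a) multiset \<Rightarrow> ('b set \<times> 'b) multiset" where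
  "T f N = image_mset (\<lambda>(A,p). (f ` A, f p)) N"

lemma T_bc:
  assumes inj: "inj_on f S" and wf: "\<forall>(A,p)\<in>#N. A \<subseteq> S \<and> p \<in> S" and ab: "a \<in> S" "b \<in> S"
  shows "bc (T f N) (f a) (f b) = bc N a b"
proof -
  have e: "(f c \<in> f ` A) = (c \<in> A)" if "A \<subseteq> S" "c \<in> S" for A c
    using inj that by (auto simp: inj_on_def)
  show ?thesis unfolding bc_def T_def filter_mset_image_mset size_image_mset
  proof (rule arg_cong[where f=size], rule filter_mset_cong[OF refl])
    fix x assume "x \<in># N"
    then obtain A p where "x = (A,p)" "A \<subseteq> S" "p \<in> S" using wf by (cases x) auto
    then show "(case (\<lambda>(A, p). (f ` A, f p)) x of (A, p) \<Rightarrow> f a \<in> A \<and> f b \<in> A) =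
          (case x of (A, p) \<Rightarrow> a \<in> A \<and> b \<in> A)" using e[of A a] e[of A b] ab by simp
  qed
qed

lemma T_ac:
  assumes inj: "inj_on f S" and wf: "\<forall>(A,p)\<in>#N. A \<subseteq> S \<and> p \<in> S" and ab: "a \<in> S" "b \<in> S"
  shows "ac (T f N) (f a) (f b) = ac N a b"
proof -
  have e: "(f c \<in> insert (f p) (f ` A)) = (c \<in> insert p A)" if "A \<subseteq> S" "p \<in> S" "c \<in> S" for A p c
  proof -
    have "insert (f p) (f ` A) = f ` (insert p A)" by simp
    moreover have "insert p A \<subseteq> S" using that by auto
    ultimately show ?thesis using inj that by (auto simp: inj_on_def)
  qed
  show ?thesis unfolding ac_def T_def filter_mset_image_mset size_image_mset
  proof (rule arg_cong[where f=size], rule filter_mset_cong[OF refl])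
    fix x assume "x \<in># N"
    then obtain A p where "x = (A,p)" "A \<subseteq> S" "p \<in> S" using wf by (cases x) auto
    then show "(case (\<lambda>(A, p). (f ` A, f p)) x of (A, p) \<Rightarrow> f a \<in> insert p A \<and> f b \<in> insert p A) =
          (case x of (A, p) \<Rightarrow> a \<in> insert p A \<and> b \<in> insert p A)" using e[of A p a] e[of A p b] ab by simp
  qed
qed

lemma T_zero:
  assumes wf: "\<forall>(A,p)\<in>#N. A \<subseteq> S \<and> p \<in> S" and u: "u \<notin> f ` S"
  shows "bc (T f N) u w = 0" "bc (T f N) w u = 0" "ac (T f N) u w = 0" "ac (T f N) w u = 0"
  using wf u unfolding bc_def ac_def T_def by fastforce+

lemma wfb_weak: "wfb S N \<Longrightarrow> \<forall>(A,p)\<in>#N. A \<subseteq> S \<and> p \<in> S"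
  unfolding wfb_def by fastforce

lemma T_wfb:
  assumes inj: "inj_on f S" and wf: "wfb S N"
  shows "wfb (f ` S) (T f N)"
proof -
  have *: "f ` A \<subseteq> f ` S \<and> card (f ` A) = 4 \<and> f p \<in> f ` S \<and> f p \<notin> f ` A" if Ap: "(A,p) \<in># N" for A p
  proof -
    have h: "A \<subseteq> S" "card A = 4" "p \<in> S" "p \<notin> A" using wf Ap unfolding wfb_def by auto
    then have "card (f ` A) = 4" using card_image[OF inj_on_subset[OF inj h(1)]] by simp
    moreover have "f p \<notin> f ` A" using h inj by (auto simp: inj_on_def)
    ultimately show ?thesis using h by auto
  qed
  show ?thesis unfolding wfb_def T_def
  proof (intro ballI)
    fix y assume "y \<in># image_mset (\<lambda>(A,p). (f ` A, f p)) N"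
    then obtain A p where "(A,p) \<in># N" "y = (f`A, f p)" by auto
    then show "case y of (A', p') \<Rightarrow> A' \<subseteq> f ` S \<and> card A' = 4 \<and> p' \<in> f ` S \<and> p' \<notin> A'"
      using * by simp
  qed
qed

lemma T_good:
  assumes inj: "inj_on f S" and wf: "wfb S N"
    and loc: "\<And>a b. a \<in> S \<Longrightarrow> b \<in> S \<Longrightarrow> a \<noteq> b \<Longrightarrow> ac N a b \<le> 2 * bc N a b"
  shows "good (T f N)"
  unfolding good_def
proof (intro allI impI)
  fix x y :: 'b assume xy: "x \<noteq> y"
  have w: "\<forall>(A,p)\<in>#N. A \<subseteq> S \<and> p \<in> S" using wfb_weak[OF wf] .
  show "ac (T f N) x y \<le> 2 * bc (T f N) x y"
  proof (cases "x \<in> f ` S \<and> y \<in> f ` S")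
    case True
    then obtain a b where ab: "a \<in> S" "b \<in> S" "x = f a" "y = f b" by blast
    then have "a \<noteq> b" using xy by blast
    then show ?thesis using loc[OF ab(1,2)] T_bc[OF inj w ab(1,2)] T_ac[OF inj w ab(1,2)] ab by simp
  next
    case False
    then consider "x \<notin> f ` S" | "y \<notin> f ` S" by blast
    then show ?thesis by cases (simp_all add: T_zero[OF w])
  qed
qed

lemma T_bc_fill:
  assumes inj: "inj_on f S" and wf: "wfb S N"
    and one: "\<And>a b. a \<in> S \<Longrightarrow> b \<in> S \<Longrightarrow> a \<noteq> b \<Longrightarrow> bc N a b = 1"
    and xy: "x \<noteq> y"
  shows "bc (T f N) x y = (if x \<in> f ` S \<and> y \<in> f ` S then 1 else 0)"
proof -
  have w: "\<forall>(A,p)\<in>#N. A \<subseteq> S \<and> p \<in> S" using wfb_weak[OF wf] .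
  show ?thesis
  proof (cases "x \<in> f ` S \<and> y \<in> f ` S")
    case True
    then obtain a b where ab: "a \<in> S" "b \<in> S" "x = f a" "y = f b" by blast
    then have "a \<noteq> b" using xy by blast
    then show ?thesis using one[OF ab(1,2)] T_bc[OF inj w ab(1,2)] ab True by simp
  next
    case False
    then show ?thesis using T_zero[OF w] by auto
  qed
qed

definition bp :: "(nat list \<times> nat) list \<Rightarrow> nat \<Rightarrow> nat list" where
  "bp L a = concat (map (\<lambda>(l,p). if a \<in> set l then filter (\<lambda>b. b \<noteq> a) l else []) L)"
definition adp :: "(nat list \<times> nat) list \<Rightarrow> nat \<Rightarrow> nat list" where
  "adp L a = concat (map (\<lambda>(l,p). if a = p then l else if a \<in> set l then [p] else []) L)"
definition okb :: "(nat list \<times> nat) list \<Rightarrow> nat \<Rightarrow> bool" where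
  "okb L n = list_all (\<lambda>(l,p). distinct (p#l) \<and> length l = 4 \<and> list_all (\<lambda>x. x < n) (p#l)) L"
definition N_of :: "(nat list \<times> nat) list \<Rightarrow> (nat set \<times> nat) multiset" where
  "N_of L = mset (map (\<lambda>(l,p). (set l, p)) L)"

lemma count_distinct: "distinct l \<Longrightarrow> count (mset l) b = (if b \<in> set l then 1 else 0)"
  by (simp add: distinct_count_atmost_1)

lemma bc_N_of: "okb L n \<Longrightarrow> a \<noteq> b \<Longrightarrow> bc (N_of L) a b = count (mset (bp L a)) b"
proof (induction L)
  case Nil
  then show ?case by (simp add: bc_def N_of_def bp_def)
next
  case (Cons lp L)
  obtain l p where lp: "lp = (l,p)" by fastforce
  have d: "distinct l" and ok: "okb L n" using Cons.prems lp by (auto simp: okb_def)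
  have "bc (N_of (lp # L)) a b = (if a \<in> set l \<and> b \<in> set l then 1 else 0) + bc (N_of L) a b"
    by (simp add: bc_def N_of_def lp)
  moreover have "count (mset (bp (lp # L) a)) b = (if a \<in> set l \<and> b \<in> set l then 1 else 0) + count (mset (bp L a)) b"
    using d Cons.prems(2) by (simp add: bp_def lp count_distinct)
  ultimately show ?case using Cons.IH[OF ok Cons.prems(2)] by simp
qed

lemma ac_N_of: "okb L n \<Longrightarrow> a \<noteq> b \<Longrightarrow> ac (N_of L) a b = bc (N_of L) a b + count (mset (adp L a)) b"
proof (induction L)
  case Nil
  then show ?case by (simp add: ac_def bc_def N_of_def adp_def)
next
  case (Cons lp L)
  obtain l p where lp: "lp = (l,p)" by fastforce
  have d: "distinct l" "p \<notin> set l" and ok: "okb L n" using Cons.prems lp by (auto simp: okb_def)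
  have "ac (N_of (lp # L)) a b = (if a \<in> insert p (set l) \<and> b \<in> insert p (set l) then 1 else 0) + ac (N_of L) a b"
    by (simp add: ac_def N_of_def lp)
  moreover have "bc (N_of (lp # L)) a b = (if a \<in> set l \<and> b \<in> set l then 1 else 0) + bc (N_of L) a b"
    by (simp add: bc_def N_of_def lp)
  moreover have "count (mset (adp (lp # L) a)) b = (if a = p then (if b \<in> set l then 1 else 0) else if a \<in> set l then (if b = p then 1 else 0) else 0) + count (mset (adp L a)) b"
    using d by (simp add: adp_def lp count_distinct)
  ultimately show ?case using Cons.IH[OF ok Cons.prems(2)] d Cons.prems(2) by auto
qed

lemma wfb_N_of: "okb L n \<Longrightarrow> wfb {..<n} (N_of L)"
  unfolding okb_def wfb_def N_of_def list_all_iff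
  by (fastforce simp: distinct_card)

definition fE :: "'b list \<Rightarrow> nat \<Rightarrow> ('b \<times> nat) option" where
  "fE e i = Some (e ! (i div 3), i mod 3)"
definition fN :: "'b list \<Rightarrow> nat \<Rightarrow> ('b \<times> nat) option" where
  "fN e i = (if i < 3 * length e then fE e i else None)"

lemma fE_inj: "distinct e \<Longrightarrow> inj_on (fE e) {..<3 * length e}"
proof (rule inj_onI)
  fix i j assume d: "distinct e" and i: "i \<in> {..<3 * length e}" and j: "j \<in> {..<3 * length e}"
    and eq: "fE e i = fE e j"
  have "i div 3 < length e" "j div 3 < length e" using i j by auto
  moreover have "e ! (i div 3) = e ! (j div 3)" "i mod 3 = j mod 3" using eq by (auto simp: fE_def)
  ultimately have "i div 3 = j div 3" "i mod 3 = j mod 3" using d nth_eq_iff_index_eq by blast+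
  then show "i = j" by (metis div_mult_mod_eq)
qed

lemma fE_img: "fE e ` {..<3 * length e} = {Some (z, a) | z (a::nat). z \<in> set e \<and> a < 3}"
proof (intro equalityI subsetI)
  fix y assume "y \<in> fE e ` {..<3 * length e}"
  then obtain i where i: "i < 3 * length e" "y = fE e i" by auto
  then have "i div 3 < length e" by auto
  then show "y \<in> {Some (z, a) | z (a::nat). z \<in> set e \<and> a < 3}" using i by (auto simp: fE_def)
next
  fix y assume "y \<in> {Some (z, a) | z (a::nat). z \<in> set e \<and> a < 3}"
  then obtain z a where y: "y = Some (z, a)" and z: "z \<in> set e" and a: "a < (3::nat)" by blast
  then obtain c where c: "c < length e" "e ! c = z" by (meson in_set_conv_nth)
  have "3 * c + a < 3 * length e" using c a by linarith
  moreover have "fE e (3 * c + a) = Some (z, a)" using a c by (simp add: fE_def)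
  ultimately show "y \<in> fE e ` {..<3 * length e}" unfolding y by (metis image_eqI lessThan_iff)
qed

lemma fN_inj: "distinct e \<Longrightarrow> inj_on (fN e) {..<3 * length e + 1}"
proof (rule inj_onI)
  fix i j assume d: "distinct e" and i: "i \<in> {..<3 * length e + 1}" and j: "j \<in> {..<3 * length e + 1}"
    and eq: "fN e i = fN e j"
  show "i = j"
  proof (cases "i < 3 * length e \<and> j < 3 * length e")
    case True
    then show ?thesis using fE_inj[OF d] eq by (auto simp: fN_def inj_on_def)
  next
    case False
    then show ?thesis using i j eq by (auto simp: fN_def fE_def split: if_splits)
  qed
qed

lemma fN_img: "fN e ` {..<3 * length e + 1} = insert None {Some (z, a) | z (a::nat). z \<in> set e \<and> a < 3}"
proof -
  have "{..<3 * length e + 1} = insert (3 * length e) {..<3 * length e}" by auto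
  then have "fN e ` {..<3 * length e + 1} = insert (fN e (3 * length e)) (fN e ` {..<3 * length e})"
    by simp
  also have "fN e (3 * length e) = None" by (simp add: fN_def)
  also have "fN e ` {..<3 * length e} = fE e ` {..<3 * length e}"
    by (rule image_cong) (auto simp: fN_def)
  also have "fE e ` {..<3 * length e} = {Some (z, a) | z (a::nat). z \<in> set e \<and> a < 3}"
    by (rule fE_img)
  finally show ?thesis .
qed

lemma gdd_bc:
  assumes d: "distinct e" and wf: "wfb {..<3 * length e} N0"
    and own: "\<And>a b. a < 3 * length e \<Longrightarrow> b < 3 * length e \<Longrightarrow> a \<noteq> b \<Longrightarrow>
              bc N0 a b = (if b div 3 \<noteq> a div 3 then 1 else 0)"
    and uw: "u \<noteq> w"
  shows "bc (T (fE e) N0) u w = (if u \<in> fE e ` {..<3 * length e} \<and> w \<in> fE e ` {..<3 * length e}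
            \<and> fst (the u) \<noteq> fst (the w) then 1 else 0)"
proof -
  have wk: "\<forall>(A,p)\<in>#N0. A \<subseteq> {..<3 * length e} \<and> p \<in> {..<3 * length e}" using wfb_weak[OF wf] .
  show ?thesis
  proof (cases "u \<in> fE e ` {..<3 * length e} \<and> w \<in> fE e ` {..<3 * length e}")
    case True
    then obtain a b where ab: "a < 3 * length e" "b < 3 * length e" "u = fE e a" "w = fE e b" by blast
    then have "a \<noteq> b" using uw by blast
    have "a div 3 < length e" "b div 3 < length e" using ab by auto
    then have "(e ! (a div 3) \<noteq> e ! (b div 3)) = (b div 3 \<noteq> a div 3)" using d nth_eq_iff_index_eq by metis
    then show ?thesis using own[OF ab(1,2) \<open>a \<noteq> b\<close>] T_bc[OF fE_inj[OF d] wk, of a b] ab True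
      by (simp add: fE_def)
  next
    case False
    then consider "u \<notin> fE e ` {..<3 * length e}" | "w \<notin> fE e ` {..<3 * length e}" by blast
    then show ?thesis by cases (simp_all add: T_zero[OF wk])
  qed
qed

lemma size_filter_sum_mset: "size (filter_mset Q (sum_mset MM)) = sum_mset (image_mset (\<lambda>C. size (filter_mset Q C)) MM)"
  by (induction MM) auto

lemma sum_mset_if_const: "sum_mset (image_mset (\<lambda>A. if Q A then (c::nat) else 0) M) = c * size (filter_mset Q M)"
  by (induction M) auto

lemma sum_indicator: "finite Y \<Longrightarrow> (\<Sum>y\<in>Y. if y \<in> A then 1 else (0::nat)) = card (A \<inter> Y)"
  by (simp add: sum.If_cases Int_commute)

lemma dc: "finite Y \<Longrightarrow> (\<Sum>y\<in>Y. size (filter_mset (\<lambda>A. x \<in> A \<and> y \<in> A) M)) =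
   sum_mset (image_mset (\<lambda>A. if x \<in> A then card (A \<inter> Y) else 0) M)"
proof (induction M)
  case empty
  then show ?case by simp
next
  case (add A M)
  have "(\<Sum>y\<in>Y. size (filter_mset (\<lambda>A. x \<in> A \<and> y \<in> A) (add_mset A M))) =
        (\<Sum>y\<in>Y. (if x \<in> A \<and> y \<in> A then 1 else 0) + size (filter_mset (\<lambda>A. x \<in> A \<and> y \<in> A) M))"
    by (rule sum.cong) auto
  also have "\<dots> = (\<Sum>y\<in>Y. if x \<in> A \<and> y \<in> A then 1 else 0) + (\<Sum>y\<in>Y. size (filter_mset (\<lambda>A. x \<in> A \<and> y \<in> A) M))"
    by (rule sum.distrib)
  also have "(\<Sum>y\<in>Y. if x \<in> A \<and> y \<in> A then 1 else (0::nat)) = (if x \<in> A then card (A \<inter> Y) else 0)"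
    using sum_indicator[OF add.prems, of A] by auto
  finally show ?case using add by simp
qed

lemma size_P:
  assumes bibd: "is_bibd X0 n 8 1 B0" and n: "n = 56 * m + 8"
    and sP: "sum_mset P = B0" and pcl: "\<forall>C\<in>#P. parallel_class X0 C"
  shows "size P = 8 * m + 1"
proof -
  have fin: "finite X0" and cX: "card X0 = n" and bo: "blocks_ok X0 8 B0"
    and pc1: "\<And>x y. x \<in> X0 \<Longrightarrow> y \<in> X0 \<Longrightarrow> x \<noteq> y \<Longrightarrow> pair_count B0 x y = 1"
    using bibd unfolding is_bibd_def by auto
  have "X0 \<noteq> {}" using cX n by auto
  then obtain x where x: "x \<in> X0" by blast
  have deg: "size (filter_mset (\<lambda>A. x \<in> A) B0) = size P"
  proof -
    have "size (filter_mset (\<lambda>A. x \<in> A) B0) = sum_mset (image_mset (\<lambda>C. size (filter_mset (\<lambda>A. x \<in> A) C)) P)"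
      using sP size_filter_sum_mset by metis
    also have "\<dots> = sum_mset (image_mset (\<lambda>C. 1) P)"
      by (rule arg_cong[where f=sum_mset], rule image_mset_cong) (use pcl x in \<open>auto simp: parallel_class_def\<close>)
    finally show ?thesis by simp
  qed
  have "(\<Sum>y\<in>X0-{x}. pair_count B0 x y) = (\<Sum>y\<in>X0-{x}. 1)"
    by (rule sum.cong) (use pc1 x in auto)
  also have "\<dots> = n - 1" using cX fin x by simp
  finally have s1: "(\<Sum>y\<in>X0-{x}. pair_count B0 x y) = n - 1" .
  have "(\<Sum>y\<in>X0-{x}. pair_count B0 x y) = sum_mset (image_mset (\<lambda>A. if x \<in> A then card (A \<inter> (X0-{x})) else 0) B0)"
    unfolding pair_count_def using dc[of "X0-{x}" x B0] fin by simp
  also have "image_mset (\<lambda>A. if x \<in> A then card (A \<inter> (X0-{x})) else 0) B0 = image_mset (\<lambda>A. if x \<in> A then 7 else 0) B0"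
  proof (rule image_mset_cong)
    fix A assume "A \<in># B0"
    then have "A \<subseteq> X0" "card A = 8" using bo unfolding blocks_ok_def by auto
    moreover have "finite A" using \<open>card A = 8\<close> card_ge_0_finite by force
    ultimately have "x \<in> A \<Longrightarrow> card (A \<inter> (X0-{x})) = 7"
    proof -
      assume xA: "x \<in> A"
      have "A \<inter> (X0-{x}) = A - {x}" using \<open>A \<subseteq> X0\<close> by blast
      then show ?thesis using card_Diff_singleton[OF xA] \<open>card A = 8\<close> by simp
    qed
    then show "(if x \<in> A then card (A \<inter> (X0-{x})) else 0) = (if x \<in> A then 7 else 0)" by simp
  qed
  also have "sum_mset (image_mset (\<lambda>A. if x \<in> A then 7 else 0) B0) = 7 * size P"
    using sum_mset_if_const[of "\<lambda>A. x \<in> A" 7 B0] deg by simp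
  finally show ?thesis using s1 n by simp
qed

definition L25 :: "(nat list \<times> nat) list" where
  "L25 = [([0,1,5,12], 2), ([0,2,8,17], 13), ([1,2,6,13], 3), ([1,3,9,18], 14), ([2,3,7,14], 4), ([2,4,5,19], 10), ([3,4,8,10], 0), ([3,0,6,15], 11), ([4,0,9,11], 1), ([4,1,7,16], 12), ([5,6,10,17], 7), ([5,7,13,22], 18), ([6,7,11,18], 8), ([6,8,14,23], 19), ([7,8,12,19], 9), ([7,9,10,24], 15), ([8,9,13,15], 5), ([8,5,11,20], 16), ([9,5,14,16], 6), ([9,6,12,21], 17), ([10,11,15,22], 12), ([10,12,18,2], 23), ([11,12,16,23], 13), ([11,13,19,3], 24), ([12,13,17,24], 14), ([12,14,15,4], 20), ([13,14,18,20], 10), ([13,10,16,0], 21), ([14,10,19,21], 11), ([14,11,17,1], 22), ([15,16,20,2], 17), ([15,17,23,7], 3), ([16,17,21,3], 18), ([16,18,24,8], 4), ([17,18,22,4], 19), ([17,19,20,9], 0), ([18,19,23,0], 15), ([18,15,21,5], 1), ([19,15,24,1], 16), ([19,16,22,6], 2), ([20,21,0,7], 22), ([20,22,3,12], 8), ([21,22,1,8], 23), ([21,23,4,13], 9), ([22,23,2,9], 24), ([22,24,0,14], 5), ([23,24,3,5], 20), ([23,20,1,10], 6), ([24,20,4,6], 21), ([24,21,2,11], 7)]"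

definition L8 :: "(nat list \<times> nat) list" where
  "L8 = [([0,3,7,9], 18), ([3,6,10,12], 0), ([6,9,13,15], 3), ([9,12,16,18], 6), ([0,12,15,19], 9), ([1,3,15,18], 12), ([0,4,6,18], 15), ([0,5,13,21], 20), ([3,8,16,21], 2), ([6,11,19,21], 5), ([1,9,14,21], 8), ([4,12,17,21], 11), ([7,15,20,21], 14), ([2,10,18,21], 17), ([0,8,14,17], 19), ([3,11,17,20], 1), ([2,6,14,20], 4), ([2,5,9,17], 7), ([5,8,12,20], 10), ([2,8,11,15], 13), ([5,11,14,18], 16), ([0,10,20,23], 16), ([2,3,13,23], 19), ([5,6,16,23], 1), ([8,9,19,23], 4), ([1,11,12,23], 7), ([4,14,15,23], 10), ([7,17,18,23], 13), ([0,11,16,22], 8), ([3,14,19,22], 11), ([1,6,17,22], 14), ([4,9,20,22], 17), ([2,7,12,22], 20), ([5,10,15,22], 2), ([8,13,18,22], 5), ([1,4,8,10], 18), ([4,7,11,13], 0), ([7,10,14,16], 3), ([10,13,17,19], 6), ([1,13,16,20], 9), ([2,4,16,19], 12), ([1,5,7,19], 15)]"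

definition L9 :: "(nat list \<times> nat) list" where
  "L9 = [([0,3,20,25], 6), ([1,3,6,23], 9), ([4,6,9,26], 12), ([2,7,9,12], 15), ([5,10,12,15], 18), ([8,13,15,18], 21), ([11,16,18,21], 24), ([14,19,21,24], 0), ([0,17,22,24], 3), ([0,4,10,19], 26), ([3,7,13,22], 2), ([6,10,16,25], 5), ([1,9,13,19], 8), ([4,12,16,22], 11), ([7,15,19,25], 14), ([1,10,18,22], 17), ([4,13,21,25], 20), ([1,7,16,24], 23), ([0,5,7,11], 20), ([3,8,10,14], 23), ([6,11,13,17], 26), ([9,14,16,20], 2), ([12,17,19,23], 5), ([15,20,22,26], 8), ([2,18,23,25], 11), ([1,5,21,26], 14), ([2,4,8,24], 17), ([0,6,14,18], 4), ([3,9,17,21], 7), ([6,12,20,24], 10), ([0,9,15,23], 13), ([3,12,18,26], 16), ([2,6,15,21], 19), ([5,9,18,24], 22), ([0,8,12,21], 25), ([3,11,15,24], 1), ([0,13,16,26], 7), ([2,3,16,19], 10), ([5,6,19,22], 13), ([8,9,22,25], 16), ([1,11,12,25], 19), ([1,4,14,15], 22), ([4,7,17,18], 25), ([7,10,20,21], 1), ([10,13,23,24], 4), ([1,8,17,20], 12), ([4,11,20,23], 15), ([7,14,23,26], 18), ([2,10,17,26], 21), ([2,5,13,20], 24), ([5,8,16,23], 0), ([8,11,19,26], 3), ([2,11,14,22], 6), ([5,14,17,25], 9)]"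

lemma design_facts:
  assumes ok: "okb L n"
    and bpc: "list_all (\<lambda>a. sort (bp L a) = filter (\<lambda>b. own a b) [0..<n]) [0..<n]"
    and adc: "list_all (\<lambda>a. distinct (adp L a) \<and> list_all (\<lambda>b. own a b) (adp L a)) [0..<n]"
  shows "wfb {..<n} (N_of L)"
    and "\<And>a b. a < n \<Longrightarrow> b < n \<Longrightarrow> a \<noteq> b \<Longrightarrow> bc (N_of L) a b = (if own a b then 1 else 0)"
    and "\<And>a b. a < n \<Longrightarrow> b < n \<Longrightarrow> a \<noteq> b \<Longrightarrow> ac (N_of L) a b \<le> 2 * bc (N_of L) a b"
proof -
  show "wfb {..<n} (N_of L)" using wfb_N_of[OF ok] .
  have bcv: "bc (N_of L) a b = (if own a b then 1 else 0)" if "a < n" "b < n" "a \<noteq> b" for a b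
  proof -
    have "sort (bp L a) = filter (\<lambda>b. own a b) [0..<n]" using bpc that by (simp add: list_all_iff)
    then have "mset (bp L a) = mset (filter (\<lambda>b. own a b) [0..<n])" by (metis mset_sort)
    then show ?thesis using bc_N_of[OF ok that(3)] that by (simp add: count_distinct)
  qed
  show "\<And>a b. a < n \<Longrightarrow> b < n \<Longrightarrow> a \<noteq> b \<Longrightarrow> bc (N_of L) a b = (if own a b then 1 else 0)"
    using bcv by blast
  show "ac (N_of L) a b \<le> 2 * bc (N_of L) a b" if "a < n" "b < n" "a \<noteq> b" for a b
  proof -
    have d: "distinct (adp L a)" and o: "\<forall>b\<in>set (adp L a). own a b" using adc that by (auto simp: list_all_iff)
    have "count (mset (adp L a)) b \<le> (if own a b then 1 else 0)"
      using d o by (auto simp: count_distinct)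
    then show ?thesis using ac_N_of[OF ok that(3)] bcv[OF that] by simp
  qed
qed

lemma L25_okb: "okb L25 25" by code_simp
lemma L25_bp: "list_all (\<lambda>a. sort (bp L25 a) = filter (\<lambda>b. b \<noteq> a) [0..<25]) [0..<25]" by code_simp
lemma L25_adp: "list_all (\<lambda>a. distinct (adp L25 a) \<and> list_all (\<lambda>b. b \<noteq> a) (adp L25 a)) [0..<25]" by code_simp
lemma L8_okb: "okb L8 24" by code_simp
lemma L8_bp: "list_all (\<lambda>a. sort (bp L8 a) = filter (\<lambda>b. b div 3 \<noteq> a div 3) [0..<24]) [0..<24]" by code_simp
lemma L8_adp: "list_all (\<lambda>a. distinct (adp L8 a) \<and> list_all (\<lambda>b. b div 3 \<noteq> a div 3) (adp L8 a)) [0..<24]" by code_simp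
lemma L9_okb: "okb L9 27" by code_simp
lemma L9_bp: "list_all (\<lambda>a. sort (bp L9 a) = filter (\<lambda>b. b div 3 \<noteq> a div 3) [0..<27]) [0..<27]" by code_simp
lemma L9_adp: "list_all (\<lambda>a. distinct (adp L9 a) \<and> list_all (\<lambda>b. b div 3 \<noteq> a div 3) (adp L9 a)) [0..<27]" by code_simp

lemmas F25 = design_facts[where own="\<lambda>a b. b \<noteq> a", OF L25_okb L25_bp L25_adp]
lemmas F8 = design_facts[where own="\<lambda>a b. b div 3 \<noteq> a div 3", OF L8_okb L8_bp L8_adp]
lemmas F9 = design_facts[where own="\<lambda>a b. b div 3 \<noteq> a div 3", OF L9_okb L9_bp L9_adp]

type_synonym Q = "((nat + nat) \<times> nat) option"

definition eA :: "nat \<Rightarrow> nat \<Rightarrow> nat set \<Rightarrow> (nat + nat) list" where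
  "eA t j A = map Inl (sorted_list_of_set A) @ (if 1 \<le> j \<and> j \<le> t then [Inr (j - 1)] else [])"
definition fillN :: "nat set \<Rightarrow> (Q set \<times> Q) multiset" where
  "fillN G = T (fN (map Inl (sorted_list_of_set G) :: (nat + nat) list)) (N_of L25)"
definition gddN :: "nat \<Rightarrow> nat \<Rightarrow> nat set \<Rightarrow> (Q set \<times> Q) multiset" where
  "gddN t j A = (if 1 \<le> j \<and> j \<le> t then T (fE (eA t j A)) (N_of L9) else T (fE (eA t j A)) (N_of L8))"
definition bigN :: "nat \<Rightarrow> (nat \<Rightarrow> nat) \<Rightarrow> (nat set \<times> nat) multiset \<Rightarrow> (Q set \<times> Q) multiset" where
  "bigN t h NY = T (fN (map Inr [0..<t] :: (nat + nat) list) \<circ> h) NY"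
definition Xf :: "nat set \<Rightarrow> nat \<Rightarrow> Q set" where
  "Xf X0 t = insert None (Some ` ((Inl ` X0 \<union> Inr ` {..<t}) \<times> {..<3}))"
definition ImS :: "(nat + nat) set \<Rightarrow> Q set" where
  "ImS Z = {Some (z, a) | z (a::nat). z \<in> Z \<and> a < 3}"

lemma ImS_iff[simp]: "Some (z, a) \<in> ImS Z \<longleftrightarrow> z \<in> Z \<and> a < 3" "None \<notin> ImS Z"
  by (auto simp: ImS_def)

lemma fE_img': "fE e ` {..<3 * length e} = ImS (set e)"
  using fE_img[of e] by (simp add: ImS_def)
lemma fN_img': "fN e ` {..<3 * length e + 1} = insert None (ImS (set e))"
  using fN_img[of e] by (simp add: ImS_def)

lemma gdd_comp:
  assumes d: "distinct e" and k: "(length e = 8 \<and> N0 = N_of L8) \<or> (length e = 9 \<and> N0 = N_of L9)"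
  shows "wfb (ImS (set e)) (T (fE e) N0)" "good (T (fE e) N0)"
    "\<And>u w. u \<noteq> w \<Longrightarrow> bc (T (fE e) N0) u w = (if u \<in> ImS (set e) \<and> w \<in> ImS (set e) \<and> fst (the u) \<noteq> fst (the w) then 1 else 0)"
proof -
  have wf: "wfb {..<3 * length e} N0"
    and own: "\<And>a b. a < 3 * length e \<Longrightarrow> b < 3 * length e \<Longrightarrow> a \<noteq> b \<Longrightarrow>
              bc N0 a b = (if b div 3 \<noteq> a div 3 then 1 else 0)"
    and loc: "\<And>a b. a \<in> {..<3 * length e} \<Longrightarrow> b \<in> {..<3 * length e} \<Longrightarrow> a \<noteq> b \<Longrightarrow> ac N0 a b \<le> 2 * bc N0 a b"
    using k F8 F9 by auto
  show "wfb (ImS (set e)) (T (fE e) N0)" using T_wfb[OF fE_inj[OF d] wf] fE_img' by metis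
  show "good (T (fE e) N0)" using T_good[OF fE_inj[OF d] wf loc] .
  show "bc (T (fE e) N0) u w = (if u \<in> ImS (set e) \<and> w \<in> ImS (set e) \<and> fst (the u) \<noteq> fst (the w) then 1 else 0)"
    if uw: "u \<noteq> w" for u w
  proof -
    have "bc (T (fE e) N0) u w = (if u \<in> fE e ` {..<3 * length e} \<and> w \<in> fE e ` {..<3 * length e}
            \<and> fst (the u) \<noteq> fst (the w) then 1 else 0)"
      by (rule gdd_bc[OF d wf]) (fact own, fact uw)
    then show ?thesis unfolding fE_img' .
  qed
qed

lemma fill_comp:
  fixes G :: "nat set"
  assumes G: "card G = 8"
  shows "wfb (insert None (ImS (Inl ` G))) (fillN G)" "good (fillN G)"
    "\<And>u w. u \<noteq> w \<Longrightarrow> bc (fillN G) u w = (if u \<in> insert None (ImS (Inl ` G)) \<and> w \<in> insert None (ImS (Inl ` G)) then 1 else 0)"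
proof -
  have fin: "finite G" using G card_ge_0_finite by force
  define e where "e = (map Inl (sorted_list_of_set G) :: (nat + nat) list)"
  have d: "distinct e" unfolding e_def by (simp add: distinct_map)
  have le: "length e = 8" unfolding e_def using G fin by simp
  have se: "set e = Inl ` G" unfolding e_def using fin by simp
  have S: "{..<3 * length e + 1} = {..<25}" using le by simp
  have wf: "wfb {..<3 * length e + 1} (N_of L25)" using F25(1) S by simp
  have one: "\<And>a b. a \<in> {..<3 * length e + 1} \<Longrightarrow> b \<in> {..<3 * length e + 1} \<Longrightarrow> a \<noteq> b \<Longrightarrow> bc (N_of L25) a b = 1"
    using F25(2) S by auto
  have loc: "\<And>a b. a \<in> {..<3 * length e + 1} \<Longrightarrow> b \<in> {..<3 * length e + 1} \<Longrightarrow> a \<noteq> b \<Longrightarrow> ac (N_of L25) a b \<le> 2 * bc (N_of L25) a b"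
    using F25(3) S by auto
  have fd: "fillN G = T (fN e) (N_of L25)" unfolding fillN_def e_def ..
  show "wfb (insert None (ImS (Inl ` G))) (fillN G)" using T_wfb[OF fN_inj[OF d] wf] fN_img'[of e] se fd by simp
  show "good (fillN G)" using T_good[OF fN_inj[OF d] wf loc] fd by simp
  show "\<And>u w. u \<noteq> w \<Longrightarrow> bc (fillN G) u w = (if u \<in> insert None (ImS (Inl ` G)) \<and> w \<in> insert None (ImS (Inl ` G)) then 1 else 0)"
    using T_bc_fill[OF fN_inj[OF d] wf one] fN_img'[of e] se fd by simp
qed

lemma big_comp:
  fixes Y :: "nat set" and D :: "nat set multiset" and psi :: "nat set \<Rightarrow> nat" and h :: "nat \<Rightarrow> nat"
  assumes Yb: "is_bibd Y (3*t+1) 4 1 D"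
    and psiY: "\<forall>A\<in>#D. psi A \<in> Y"
    and Yp: "is_partial_bibd Y (3*t+1) 5 2 (image_mset (\<lambda>A. insert (psi A) A) D)"
    and hb: "bij_betw h Y {..<3*t+1}"
  defines "NY \<equiv> image_mset (\<lambda>A. (A, psi A)) D"
  shows "wfb (insert None (ImS (Inr ` {..<t}))) (bigN t h NY)" "good (bigN t h NY)"
    "\<And>u w. u \<noteq> w \<Longrightarrow> bc (bigN t h NY) u w = (if u \<in> insert None (ImS (Inr ` {..<t})) \<and> w \<in> insert None (ImS (Inr ` {..<t})) then 1 else 0)"
proof -
  define e where "e = (map Inr [0..<t] :: (nat + nat) list)"
  have d: "distinct e" unfolding e_def by (simp add: distinct_map)
  have le: "length e = t" unfolding e_def by simp
  have se: "set e = Inr ` {..<t}" unfolding e_def by auto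
  have injh: "inj_on h Y" and hY: "h ` Y = {..<3*t+1}" using hb by (auto simp: bij_betw_def)
  have inj: "inj_on (fN e \<circ> h) Y"
    using comp_inj_on[OF injh] fN_inj[OF d] hY le by simp
  have "(fN e \<circ> h) ` Y = fN e ` (h ` Y)" by (simp add: image_comp)
  also have "h ` Y = {..<3 * length e + 1}" using hY le by simp
  also have "fN e ` {..<3 * length e + 1} = insert None (ImS (set e))" by (rule fN_img')
  finally have img: "(fN e \<circ> h) ` Y = insert None (ImS (Inr ` {..<t}))" using se by simp
  have fst_NY: "image_mset fst NY = D" unfolding NY_def by (simp add: multiset.map_comp o_def)
  have aug_NY: "image_mset (\<lambda>(A,p). insert p A) NY = image_mset (\<lambda>A. insert (psi A) A) D"
    unfolding NY_def by (simp add: multiset.map_comp o_def)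
  have wf: "wfb Y NY"
    unfolding wfb_def NY_def
  proof (intro ballI)
    fix x assume "x \<in># image_mset (\<lambda>A. (A, psi A)) D"
    then obtain A where A: "A \<in># D" "x = (A, psi A)" by auto
    have "A \<subseteq> Y" "card A = 4" using Yb A unfolding is_bibd_def blocks_ok_def by auto
    moreover have "card (insert (psi A) A) = 5" using Yp A unfolding is_partial_bibd_def blocks_ok_def by auto
    ultimately have "psi A \<notin> A"
    proof (intro notI)
      assume "card A = 4" "card (insert (psi A) A) = 5" "psi A \<in> A"
      then show False using insert_absorb[of "psi A" A] by simp
    qed
    then show "case x of (A, p) \<Rightarrow> A \<subseteq> Y \<and> card A = 4 \<and> p \<in> Y \<and> p \<notin> A"
      using A psiY \<open>A \<subseteq> Y\<close> \<open>card A = 4\<close> by auto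
  qed
  have one: "\<And>a b. a \<in> Y \<Longrightarrow> b \<in> Y \<Longrightarrow> a \<noteq> b \<Longrightarrow> bc NY a b = 1"
    using Yb pc_fst[of NY] fst_NY unfolding is_bibd_def by metis
  have loc: "\<And>a b. a \<in> Y \<Longrightarrow> b \<in> Y \<Longrightarrow> a \<noteq> b \<Longrightarrow> ac NY a b \<le> 2 * bc NY a b"
  proof -
    fix a b assume ab: "a \<in> Y" "b \<in> Y" "a \<noteq> b"
    have "ac NY a b \<le> 2" using Yp pc_aug[of NY] aug_NY ab unfolding is_partial_bibd_def by metis
    then show "ac NY a b \<le> 2 * bc NY a b" using one[OF ab] by simp
  qed
  have bd: "bigN t h NY = T (fN e \<circ> h) NY" unfolding bigN_def e_def ..
  show "wfb (insert None (ImS (Inr ` {..<t}))) (bigN t h NY)" using T_wfb[OF inj wf] img bd by simp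
  show "good (bigN t h NY)" using T_good[OF inj wf loc] bd by simp
  show "\<And>u w. u \<noteq> w \<Longrightarrow> bc (bigN t h NY) u w = (if u \<in> insert None (ImS (Inr ` {..<t})) \<and> w \<in> insert None (ImS (Inr ` {..<t})) then 1 else 0)"
    using T_bc_fill[OF inj wf one] img bd by simp
qed

lemma sum_list_single:
  assumes "distinct xs" "k \<in> set xs"
  shows "sum_list (map (\<lambda>j. if j = k then f j else (0::nat)) xs) = f k"
  using assms by (simp add: sum_list_distinct_conv_sum_set)

lemma pc_plus: "pair_count (M + N) x y = pair_count M x y + pair_count N x y"
  by (simp add: pair_count_def)
lemma pc_sum_list: "pair_count (sum_list Ms) x y = sum_list (map (\<lambda>M. pair_count M x y) Ms)"
  by (induction Ms) (auto simp: pc_plus, simp add: pair_count_def)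

lemma sum_mset_indicator: "sum_mset (image_mset (\<lambda>A. if Q A then 1 else 0) M) = size (filter_mset Q M)"
  using sum_mset_if_const[of Q 1 M] by simp

lemma set_eA: "finite A \<Longrightarrow> set (eA t j A) = Inl ` A \<union> (if 1 \<le> j \<and> j \<le> t then {Inr (j - 1)} else {})"
  by (auto simp: eA_def)

lemma distinct_eA: "finite A \<Longrightarrow> distinct (eA t j A)"
  by (auto simp: eA_def distinct_map)

lemma length_eA: "finite A \<Longrightarrow> length (eA t j A) = card A + (if 1 \<le> j \<and> j \<le> t then 1 else 0)"
  by (simp add: eA_def)

lemma Inl_img_iff[simp]: "Inl x \<in> Inl ` G \<longleftrightarrow> x \<in> G" "Inr i \<notin> Inl ` G"
    "Inr i \<in> Inr ` I \<longleftrightarrow> i \<in> I" "Inl x \<notin> Inr ` I"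
  by auto

context
  fixes X0 :: "nat set" and B0 :: "nat set multiset" and P :: "nat set multiset multiset"
    and Ps :: "nat set multiset list" and m t :: nat and NB :: "(Q set \<times> Q) multiset"
  assumes bibd: "is_bibd X0 (56*m+8) 8 1 B0"
    and sP: "sum_mset P = B0" and pcl: "\<forall>C\<in>#P. parallel_class X0 C"
    and Ps: "mset Ps = P"
    and tle: "t \<le> 8*m"
    and NBwf: "wfb (insert None (ImS (Inr ` {..<t}))) NB" and NBgood: "good NB"
    and NBbc: "\<And>u w. u \<noteq> w \<Longrightarrow> bc NB u w = (if u \<in> insert None (ImS (Inr ` {..<t})) \<and> w \<in> insert None (ImS (Inr ` {..<t})) then 1 else 0)"
begin

lemma len: "length Ps = 8*m+1"
proof -
  have "size (mset Ps) = 8*m+1" unfolding Ps by (rule size_P[OF bibd refl sP pcl])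
  then show ?thesis by simp
qed

lemma blk: "A \<in># B0 \<Longrightarrow> A \<subseteq> X0 \<and> card A = 8 \<and> finite A"
proof -
  assume A: "A \<in># B0"
  have "A \<subseteq> X0 \<and> card A = 8" using bibd A unfolding is_bibd_def blocks_ok_def by blast
  moreover then have "finite A" using card_ge_0_finite[of A] by simp
  ultimately show ?thesis by blast
qed

lemma PsP: "j < length Ps \<Longrightarrow> Ps ! j \<in># P"
  using Ps nth_mem by (metis set_mset_mset)

lemma PsB: "j < length Ps \<Longrightarrow> A \<in># Ps!j \<Longrightarrow> A \<in># B0"
proof -
  assume j: "j < length Ps" and A: "A \<in># Ps!j"
  have "A \<in># sum_mset P" using PsP[OF j] A in_Union_mset_iff by blast
  then show "A \<in># B0" using sP by simp
qed

lemma par: "j < length Ps \<Longrightarrow> x \<in> X0 \<Longrightarrow> size (filter_mset (\<lambda>A. x \<in> A) (Ps!j)) = 1"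
proof -
  assume j: "j < length Ps" and x: "x \<in> X0"
  have "parallel_class X0 (Ps!j)" using PsP[OF j] pcl by blast
  then show ?thesis using x unfolding parallel_class_def by blast
qed

lemma sumPs: "sum_list Ps = B0"
proof -
  have "sum_list Ps = sum_mset (mset Ps)" by (simp add: sum_mset_sum_list)
  then show ?thesis using Ps sP by simp
qed

lemma fillC:
  assumes "G \<in># Ps!0"
  shows "wfb (insert None (ImS (Inl ` G))) (fillN G)" "good (fillN G)"
    "\<And>u w. u \<noteq> w \<Longrightarrow> bc (fillN G) u w = (if u \<in> insert None (ImS (Inl ` G)) \<and> w \<in> insert None (ImS (Inl ` G)) then 1 else 0)"
proof -
  have "0 < length Ps" using len by simp
  then have "card G = 8" using blk[OF PsB[OF _ assms]] by blast
  note F = fill_comp[OF this]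
  show "wfb (insert None (ImS (Inl ` G))) (fillN G)" by (rule F(1))
  show "good (fillN G)" by (rule F(2))
  show "\<And>u w. u \<noteq> w \<Longrightarrow> bc (fillN G) u w = (if u \<in> insert None (ImS (Inl ` G)) \<and> w \<in> insert None (ImS (Inl ` G)) then 1 else 0)"
    by (rule F(3))
qed

lemma gddC:
  assumes j: "j < length Ps" and A: "A \<in># Ps!j"
  shows "wfb (ImS (set (eA t j A))) (gddN t j A)" "good (gddN t j A)"
    "\<And>u w. u \<noteq> w \<Longrightarrow> bc (gddN t j A) u w = (if u \<in> ImS (set (eA t j A)) \<and> w \<in> ImS (set (eA t j A)) \<and> fst (the u) \<noteq> fst (the w) then 1 else 0)"
proof -
  have c: "card A = 8" "finite A" using blk PsB[OF j A] by auto
  have d: "distinct (eA t j A)" using distinct_eA[OF c(2)] .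
  have k: "(length (eA t j A) = 8 \<and> gddN t j A = T (fE (eA t j A)) (N_of L8)) \<or> (length (eA t j A) = 9 \<and> gddN t j A = T (fE (eA t j A)) (N_of L9))"
  proof (cases "1 \<le> j \<and> j \<le> t")
    case True
    then have "length (eA t j A) = 9" using length_eA[OF c(2), of t j] c by simp
    moreover have "gddN t j A = T (fE (eA t j A)) (N_of L9)" using True by (simp add: gddN_def)
    ultimately show ?thesis by blast
  next
    case False
    then have "length (eA t j A) = 8" using length_eA[OF c(2), of t j] c by simp
    moreover have "gddN t j A = T (fE (eA t j A)) (N_of L8)" unfolding gddN_def by (rule if_not_P[OF False])
    ultimately show ?thesis by blast
  qed
  obtain N0 where k': "(length (eA t j A) = 8 \<and> N0 = N_of L8) \<or> (length (eA t j A) = 9 \<and> N0 = N_of L9)"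
    and g: "gddN t j A = T (fE (eA t j A)) N0"
    using k by blast
  note G = gdd_comp[OF d k']
  show "wfb (ImS (set (eA t j A))) (gddN t j A)" unfolding g by (rule G(1))
  show "good (gddN t j A)" unfolding g by (rule G(2))
  show "\<And>u w. u \<noteq> w \<Longrightarrow> bc (gddN t j A) u w = (if u \<in> ImS (set (eA t j A)) \<and> w \<in> ImS (set (eA t j A)) \<and> fst (the u) \<noteq> fst (the w) then 1 else 0)"
    unfolding g by (rule G(3))
qed

abbreviation "SF u w \<equiv> sum_mset (image_mset (\<lambda>G. bc (fillN G) u w) (Ps!0))"
abbreviation "SD u w \<equiv> sum_list (map (\<lambda>j. sum_mset (image_mset (\<lambda>A. bc (gddN t j A) u w) (Ps!j))) [1..<length Ps])"
abbreviation "Ntot \<equiv> sum_mset (image_mset fillN (Ps!0)) + NB + sum_list (map (\<lambda>j. sum_mset (image_mset (gddN t j) (Ps!j))) [1..<length Ps])"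

lemma bcsplit: "bc Ntot u w = SF u w + bc NB u w + SD u w"
  by (simp add: bc_sum_mset bc_sum_list multiset.map_comp o_def)

lemma finA: "j < length Ps \<Longrightarrow> A \<in># Ps!j \<Longrightarrow> finite A"
  using blk PsB by blast

lemma SF_conv:
  assumes uw: "u \<noteq> w"
    and R: "\<And>G. G \<in># Ps!0 \<Longrightarrow> (u \<in> insert None (ImS (Inl ` G)) \<and> w \<in> insert None (ImS (Inl ` G))) = R G"
  shows "SF u w = size (filter_mset R (Ps!0))"
proof -
  have "image_mset (\<lambda>G. bc (fillN G) u w) (Ps!0) = image_mset (\<lambda>G. if R G then 1 else 0) (Ps!0)"
  proof (rule image_mset_cong)
    fix G assume G: "G \<in># Ps!0"
    show "bc (fillN G) u w = (if R G then 1 else 0)" using fillC(3)[OF G uw] R[OF G] by simp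
  qed
  then show ?thesis using sum_mset_indicator by metis
qed

lemma SD_conv:
  assumes uw: "u \<noteq> w"
    and Q: "\<And>j A. j \<in> set [1..<length Ps] \<Longrightarrow> A \<in># Ps!j \<Longrightarrow>
       (u \<in> ImS (set (eA t j A)) \<and> w \<in> ImS (set (eA t j A)) \<and> fst (the u) \<noteq> fst (the w)) = Q j A"
  shows "SD u w = sum_list (map (\<lambda>j. size (filter_mset (Q j) (Ps!j))) [1..<length Ps])"
proof (rule arg_cong[where f=sum_list], rule map_cong[OF refl])
  fix j assume j: "j \<in> set [1..<length Ps]"
  have "image_mset (\<lambda>A. bc (gddN t j A) u w) (Ps!j) = image_mset (\<lambda>A. if Q j A then 1 else 0) (Ps!j)"
  proof (rule image_mset_cong)
    fix A assume A: "A \<in># Ps!j"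
    have jl: "j < length Ps" using j by simp
    show "bc (gddN t j A) u w = (if Q j A then 1 else 0)" using gddC(3)[OF jl A uw] Q[OF j A] by simp
  qed
  then show "sum_mset (image_mset (\<lambda>A. bc (gddN t j A) u w) (Ps!j)) = size (filter_mset (Q j) (Ps!j))"
    using sum_mset_indicator by metis
qed

lemma pc_total: "pair_count (Ps!0) x y + sum_list (map (\<lambda>j. pair_count (Ps!j) x y) [1..<length Ps]) = pair_count B0 x y"
proof -
  have L: "0 < length Ps" using len by simp
  have "pair_count B0 x y = sum_list (map (\<lambda>M. pair_count M x y) Ps)" using sumPs pc_sum_list by metis
  also have "Ps = map (\<lambda>i. Ps ! i) [0..<length Ps]" by (simp add: map_nth)
  also have "[0..<length Ps] = 0 # [1..<length Ps]" using L by (simp add: upt_conv_Cons)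
  finally show ?thesis by (simp add: o_def)
qed

lemma case_ll:
  assumes x: "x \<in> X0" and y: "y \<in> X0" and a: "a < 3" and b: "b < 3" and ne: "(x,a) \<noteq> (y,b)"
  shows "bc Ntot (Some (Inl x, a)) (Some (Inl y, b)) = 1"
proof -
  let ?u = "Some (Inl x, a) :: Q" and ?w = "Some (Inl y, b) :: Q"
  have uw: "?u \<noteq> ?w" using ne by simp
  have NB0: "bc NB ?u ?w = 0" using NBbc[OF uw] by simp
  have SF: "SF ?u ?w = size (filter_mset (\<lambda>G. x \<in> G \<and> y \<in> G) (Ps!0))"
    by (rule SF_conv[OF uw]) (use a b in simp)
  have SD: "SD ?u ?w = sum_list (map (\<lambda>j. size (filter_mset (\<lambda>A. x \<in> A \<and> y \<in> A \<and> x \<noteq> y) (Ps!j))) [1..<length Ps])"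
  proof (rule SD_conv[OF uw])
    fix j A assume j: "j \<in> set [1..<length Ps]" and A: "A \<in># Ps!j"
    have "finite A" using finA[OF _ A] j by simp
    then show "(?u \<in> ImS (set (eA t j A)) \<and> ?w \<in> ImS (set (eA t j A)) \<and> fst (the ?u) \<noteq> fst (the ?w)) = (x \<in> A \<and> y \<in> A \<and> x \<noteq> y)"
      using a b by (simp add: set_eA)
  qed
  show ?thesis
  proof (cases "x = y")
    case True
    have "SF ?u ?w = 1" using SF par[OF _ x] len True by simp
    moreover have "SD ?u ?w = 0" using SD True by simp
    ultimately show ?thesis using bcsplit NB0 by simp
  next
    case False
    have "SF ?u ?w + SD ?u ?w = pair_count B0 x y"
      using SF SD False pc_total[of x y] by (simp add: pair_count_def)
    also have "\<dots> = 1" using bibd x y False unfolding is_bibd_def by blast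
    finally show ?thesis using bcsplit NB0 by simp
  qed
qed

lemma case_lr:
  assumes x: "x \<in> X0" and i: "i < t" and a: "a < 3" and b: "b < 3"
  shows "bc Ntot (Some (Inl x, a)) (Some (Inr i, b)) = 1"
proof -
  let ?u = "Some (Inl x, a) :: Q" and ?w = "Some (Inr i, b) :: Q"
  have uw: "?u \<noteq> ?w" by simp
  have NB0: "bc NB ?u ?w = 0" using NBbc[OF uw] by simp
  have SF: "SF ?u ?w = size (filter_mset (\<lambda>G. False) (Ps!0))"
    by (rule SF_conv[OF uw]) simp
  have SD: "SD ?u ?w = sum_list (map (\<lambda>j. size (filter_mset (\<lambda>A. x \<in> A \<and> j = i + 1) (Ps!j))) [1..<length Ps])"
  proof (rule SD_conv[OF uw])
    fix j A assume j: "j \<in> set [1..<length Ps]" and A: "A \<in># Ps!j"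
    have "finite A" using finA[OF _ A] j by simp
    then show "(?u \<in> ImS (set (eA t j A)) \<and> ?w \<in> ImS (set (eA t j A)) \<and> fst (the ?u) \<noteq> fst (the ?w)) = (x \<in> A \<and> j = i + 1)"
      using a b i j by (auto simp: set_eA)
  qed
  have "sum_list (map (\<lambda>j. size (filter_mset (\<lambda>A. x \<in> A \<and> j = i + 1) (Ps!j))) [1..<length Ps])
      = sum_list (map (\<lambda>j. if j = i + 1 then size (filter_mset (\<lambda>A. x \<in> A) (Ps!j)) else 0) [1..<length Ps])"
    by (rule arg_cong[where f=sum_list], rule map_cong[OF refl]) auto
  also have "\<dots> = size (filter_mset (\<lambda>A. x \<in> A) (Ps!(i+1)))"
    by (rule sum_list_single) (use i tle len in auto)
  also have "\<dots> = 1" using par[OF _ x] i tle len by simp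
  finally show ?thesis using bcsplit NB0 SF SD by simp
qed

lemma case_ln:
  assumes x: "x \<in> X0" and a: "a < 3"
  shows "bc Ntot (Some (Inl x, a)) None = 1"
proof -
  let ?u = "Some (Inl x, a) :: Q" and ?w = "None :: Q"
  have uw: "?u \<noteq> ?w" by simp
  have NB0: "bc NB ?u ?w = 0" using NBbc[OF uw] by simp
  have SF: "SF ?u ?w = size (filter_mset (\<lambda>G. x \<in> G) (Ps!0))"
    by (rule SF_conv[OF uw]) (use a in simp)
  have SD: "SD ?u ?w = sum_list (map (\<lambda>j. size (filter_mset (\<lambda>A. False) (Ps!j))) [1..<length Ps])"
    by (rule SD_conv[OF uw]) simp
  have "SF ?u ?w = 1" using SF par[OF _ x] len by simp
  then show ?thesis using bcsplit NB0 SD by simp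
qed

lemma case_rr:
  assumes i: "i < t" and i': "i' < t" and a: "a < 3" and b: "b < 3" and ne: "(i,a) \<noteq> (i',b)"
  shows "bc Ntot (Some (Inr i, a)) (Some (Inr i', b)) = 1"
proof -
  let ?u = "Some (Inr i, a) :: Q" and ?w = "Some (Inr i', b) :: Q"
  have uw: "?u \<noteq> ?w" using ne by simp
  have NB1: "bc NB ?u ?w = 1" using NBbc[OF uw] i i' a b by simp
  have SF: "SF ?u ?w = size (filter_mset (\<lambda>G. False) (Ps!0))"
    by (rule SF_conv[OF uw]) simp
  have SD: "SD ?u ?w = sum_list (map (\<lambda>j. size (filter_mset (\<lambda>A. False) (Ps!j))) [1..<length Ps])"
  proof (rule SD_conv[OF uw])
    fix j A assume j: "j \<in> set [1..<length Ps]" and A: "A \<in># Ps!j"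
    have "finite A" using finA[OF _ A] j by simp
    then show "(?u \<in> ImS (set (eA t j A)) \<and> ?w \<in> ImS (set (eA t j A)) \<and> fst (the ?u) \<noteq> fst (the ?w)) = False"
      by (auto simp: set_eA)
  qed
  show ?thesis using bcsplit NB1 SF SD by simp
qed

lemma case_rn:
  assumes i: "i < t" and a: "a < 3"
  shows "bc Ntot (Some (Inr i, a)) None = 1"
proof -
  let ?u = "Some (Inr i, a) :: Q" and ?w = "None :: Q"
  have uw: "?u \<noteq> ?w" by simp
  have NB1: "bc NB ?u ?w = 1" using NBbc[OF uw] i a by simp
  have SF: "SF ?u ?w = size (filter_mset (\<lambda>G. False) (Ps!0))"
    by (rule SF_conv[OF uw]) simp
  have SD: "SD ?u ?w = sum_list (map (\<lambda>j. size (filter_mset (\<lambda>A. False) (Ps!j))) [1..<length Ps])"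
    by (rule SD_conv[OF uw]) simp
  show ?thesis using bcsplit NB1 SF SD by simp
qed

lemma Xf_cases:
  assumes "u \<in> Xf X0 t"
  obtains "u = None" | x a where "u = Some (Inl x, a)" "x \<in> X0" "a < 3"
    | i a where "u = Some (Inr i, a)" "i < t" "a < 3"
  using assms unfolding Xf_def by auto

lemma count1:
  assumes u: "u \<in> Xf X0 t" and w: "w \<in> Xf X0 t" and uw: "u \<noteq> w"
  shows "bc Ntot u w = 1"
  using u
proof (cases rule: Xf_cases)
  case 1
  show ?thesis using w
  proof (cases rule: Xf_cases)
    case 1
    then show ?thesis using \<open>u = None\<close> uw by simp
  next
    case (2 x a)
    have "bc Ntot w u = 1" unfolding 2(1) \<open>u = None\<close> by (rule case_ln[OF 2(2,3)])
    then show ?thesis using bc_sym by metis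
  next
    case (3 i a)
    have "bc Ntot w u = 1" unfolding 3(1) \<open>u = None\<close> by (rule case_rn[OF 3(2,3)])
    then show ?thesis using bc_sym by metis
  qed
next
  case (2 x a)
  show ?thesis using w
  proof (cases rule: Xf_cases)
    case 1
    show ?thesis unfolding 1 2(1) by (rule case_ln[OF 2(2,3)])
  next
    case (2 y b)
    show ?thesis unfolding 2(1) \<open>u = Some (Inl x, a)\<close>
      by (rule case_ll) (use 2 \<open>x \<in> X0\<close> \<open>a < 3\<close> uw \<open>u = Some (Inl x, a)\<close> in auto)
  next
    case (3 i b)
    show ?thesis unfolding 3(1) \<open>u = Some (Inl x, a)\<close>
      by (rule case_lr) (use 3 \<open>x \<in> X0\<close> \<open>a < 3\<close> in auto)
  qed
next
  case (3 i a)
  show ?thesis using w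
  proof (cases rule: Xf_cases)
    case 1
    show ?thesis unfolding 1 3(1) by (rule case_rn[OF 3(2,3)])
  next
    case (2 x b)
    have "bc Ntot w u = 1" unfolding 2(1) \<open>u = Some (Inr i, a)\<close>
      by (rule case_lr) (use 2 \<open>i < t\<close> \<open>a < 3\<close> in auto)
    then show ?thesis using bc_sym by metis
  next
    case (3 i' b)
    show ?thesis unfolding 3(1) \<open>u = Some (Inr i, a)\<close>
      by (rule case_rr) (use 3 \<open>i < t\<close> \<open>a < 3\<close> uw \<open>u = Some (Inr i, a)\<close> in auto)
  qed
qed

lemma Ntot_good: "good Ntot"
proof -
  have "good (sum_mset (image_mset fillN (Ps!0)))"
    by (rule good_sum_mset) (auto intro: fillC(2))
  moreover have "good (sum_list (map (\<lambda>j. sum_mset (image_mset (gddN t j) (Ps!j))) [1..<length Ps]))"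
  proof (rule good_sum_list)
    fix N assume "N \<in> set (map (\<lambda>j. sum_mset (image_mset (gddN t j) (Ps!j))) [1..<length Ps])"
    then obtain j where j: "j < length Ps" "N = sum_mset (image_mset (gddN t j) (Ps!j))" by auto
    show "good N" unfolding j(2) by (rule good_sum_mset) (auto intro: gddC(2)[OF j(1)])
  qed
  ultimately show ?thesis using NBgood good_plus by blast
qed

lemma Ntot_wfb: "wfb (Xf X0 t) Ntot"
proof -
  have s1: "insert None (ImS (Inl ` G)) \<subseteq> Xf X0 t" if "G \<in># Ps!0" for G
  proof -
    have "G \<subseteq> X0" using blk PsB[OF _ that] len by auto
    then show ?thesis unfolding Xf_def ImS_def by auto
  qed
  have s2: "ImS (set (eA t j A)) \<subseteq> Xf X0 t" if "j < length Ps" "A \<in># Ps!j" for j A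
  proof -
    have "A \<subseteq> X0" "finite A" using blk PsB[OF that] by auto
    then show ?thesis unfolding Xf_def ImS_def by (auto simp: set_eA split: if_splits)
  qed
  have s3: "insert None (ImS (Inr ` {..<t})) \<subseteq> Xf X0 t" unfolding Xf_def ImS_def by auto
  have "wfb (Xf X0 t) (sum_mset (image_mset fillN (Ps!0)))"
    by (rule wfb_sum_mset) (auto intro: wfb_mono[OF fillC(1) s1])
  moreover have "wfb (Xf X0 t) (sum_list (map (\<lambda>j. sum_mset (image_mset (gddN t j) (Ps!j))) [1..<length Ps]))"
  proof (rule wfb_sum_list)
    fix N assume "N \<in> set (map (\<lambda>j. sum_mset (image_mset (gddN t j) (Ps!j))) [1..<length Ps])"
    then obtain j where j: "j < length Ps" "N = sum_mset (image_mset (gddN t j) (Ps!j))" by auto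
    show "wfb (Xf X0 t) N" unfolding j(2)
      by (rule wfb_sum_mset) (auto intro: wfb_mono[OF gddC(1)[OF j(1)] s2[OF j(1)]])
  qed
  ultimately show ?thesis using wfb_mono[OF NBwf s3] wfb_plus by blast
qed


end

lemma card_Xf: "finite X0 \<Longrightarrow> card (Xf X0 t) = 3 * (card X0 + t) + 1"
proof -
  assume fin: "finite X0"
  let ?Z = "Inl ` X0 \<union> Inr ` {..<t} :: (nat + nat) set"
  have cZ: "card ?Z = card X0 + t"
    using fin by (subst card_Un_disjoint) (auto simp: card_image)
  have fZ: "finite (?Z \<times> {..<(3::nat)})" using fin by simp
  have "card (?Z \<times> {..<(3::nat)}) = 3 * (card X0 + t)" using cZ by (simp add: card_cartesian_product)
  moreover have "card (Some ` (?Z \<times> {..<(3::nat)})) = card (?Z \<times> {..<(3::nat)})"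
    by (rule card_image) simp
  moreover have "None \<notin> Some ` (?Z \<times> {..<(3::nat)})" by auto
  ultimately show ?thesis using fZ unfolding Xf_def by simp
qed

lemma finite_Xf: "finite X0 \<Longrightarrow> finite (Xf X0 t)"
  unfolding Xf_def by simp

theorem mainTheorem12:
  fixes m t :: nat
  assumes "\<exists>(X :: nat set) B. resolvable_bibd X (56*m+8) 8 1 B"
    and "t \<le> 8*m"
    and "\<exists>(X :: nat set) B. nested_bibd X (3*t+1) B"
  shows "\<exists>(X :: nat set) B. nested_bibd X (168*m+3*t+25) B"
proof -
  obtain X0 :: "nat set" and B0 where rb: "resolvable_bibd X0 (56*m+8) 8 1 B0" using assms(1) by blast
  then have bibd: "is_bibd X0 (56*m+8) 8 1 B0" unfolding resolvable_bibd_def by blast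
  obtain P where sP: "sum_mset P = B0" and pcl: "\<forall>C\<in>#P. parallel_class X0 C"
    using rb unfolding resolvable_bibd_def by blast
  obtain Ps where Ps: "mset Ps = P" using ex_mset by blast
  have fin0: "finite X0" and c0: "card X0 = 56*m+8" using bibd unfolding is_bibd_def by auto
  obtain Y :: "nat set" and D where nb: "nested_bibd Y (3*t+1) D" using assms(3) by blast
  then have Yb: "is_bibd Y (3*t+1) 4 1 D" unfolding nested_bibd_def by blast
  obtain psi where psiY: "\<forall>A\<in>#D. psi A \<in> Y"
    and Yp: "is_partial_bibd Y (3*t+1) 5 2 (image_mset (\<lambda>A. insert (psi A) A) D)"
    using nb unfolding nested_bibd_def by blast
  have finY: "finite Y" and cY: "card Y = 3*t+1" using Yb unfolding is_bibd_def by auto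
  obtain h0 where h0: "bij_betw h0 {0..<card Y} Y" using ex_bij_betw_nat_finite[OF finY] by blast
  define h where "h = the_inv_into {0..<card Y} h0"
  have hb: "bij_betw h Y {..<3*t+1}"
    using bij_betw_the_inv_into[OF h0] cY unfolding h_def by (simp add: atLeast0LessThan)
  note BC = big_comp[OF Yb psiY Yp hb]
  define NB where "NB = bigN t h (image_mset (\<lambda>A. (A, psi A)) D)"
  note ctx = bibd sP pcl Ps assms(2) BC[folded NB_def]
  define Nt where "Nt = sum_mset (image_mset fillN (Ps!0)) + NB + sum_list (map (\<lambda>j. sum_mset (image_mset (gddN t j) (Ps!j))) [1..<length Ps])"
  have wfN: "wfb (Xf X0 t) Nt" unfolding Nt_def by (rule Ntot_wfb[OF ctx])
  have gN: "good Nt" unfolding Nt_def by (rule Ntot_good[OF ctx])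
  have cN: "\<And>u w. u \<in> Xf X0 t \<Longrightarrow> w \<in> Xf X0 t \<Longrightarrow> u \<noteq> w \<Longrightarrow> bc Nt u w = 1"
    unfolding Nt_def by (rule count1[OF ctx])
  define X' where "X' = to_nat ` Xf X0 t"
  define N' where "N' = T to_nat Nt"
  have inj: "inj_on to_nat (Xf X0 t)" by simp
  have wk: "\<forall>(A,p)\<in>#Nt. A \<subseteq> Xf X0 t \<and> p \<in> Xf X0 t" using wfb_weak[OF wfN] .
  have "nested_bibd X' (168*m+3*t+25) (image_mset fst N')"
  proof (rule nested_from_N)
    show "finite X'" unfolding X'_def using finite_Xf[OF fin0] by simp
    show "card X' = 168*m+3*t+25" unfolding X'_def
      using card_image[OF inj] card_Xf[OF fin0, of t] c0 by simp
    show "wfb X' N'" unfolding X'_def N'_def by (rule T_wfb[OF inj wfN])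
    show "bc N' x y = 1" if xy: "x \<in> X'" "y \<in> X'" "x \<noteq> y" for x y
    proof -
      obtain u w where uw: "u \<in> Xf X0 t" "w \<in> Xf X0 t" "x = to_nat u" "y = to_nat w"
        using xy unfolding X'_def by blast
      then have "u \<noteq> w" using xy by blast
      then show ?thesis unfolding N'_def uw(3,4) T_bc[OF inj wk uw(1,2)] using cN uw by simp
    qed
    show "ac N' x y \<le> 2" if xy: "x \<in> X'" "y \<in> X'" "x \<noteq> y" for x y
    proof -
      obtain u w where uw: "u \<in> Xf X0 t" "w \<in> Xf X0 t" "x = to_nat u" "y = to_nat w"
        using xy unfolding X'_def by blast
      then have ne: "u \<noteq> w" using xy by blast
      have "ac Nt u w \<le> 2 * bc Nt u w" using gN ne unfolding good_def by blast
      then show ?thesis unfolding N'_def uw(3,4) T_ac[OF inj wk uw(1,2)] using cN uw ne by simp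
    qed
  qed
  then show ?thesis by blast
qed

end
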